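(* Let $V=\langle f,g,h\rangle\subset R_2$ be a three-dimensional space of quadrics in $R=K[w,x,y,z]$ whose space of linear relations $\{(\alpha_1,\alpha_2,\alpha_3)\in R_1^3:\alpha_1f+\alpha_2g+\alpha_3h=0\}$ is exactly one-dimensional. Then $V=\langle \ell\cdot U,h'\rangle$ where $\ell\in R_1$ is a linear form, $U\subset R_1$ is a two-dimensional subspace of linear forms, and $h'$ is a quadric divisible neither by $\ell$ nor by any element of $U$. Consequently, after a linear change of coordinates, either $V=\langle xw,yw,h'\rangle$ with $h'$ divisible neither by $w$ nor by any element of $\langle x,y\rangle$, or $V=\langle w^2,wx,h'\rangle$ with $h'$ divisible by no element of $\langle w,x\rangle$.
   Context: $K$ is an algebraically closed field, $R=K[w,x,y,z]$ standard graded, $R_i$ its degree-$i$ component. A net of quadrics is a three-dimensional subspace $V\subset R_2$; a linear relation is a nonzero triple of linear forms $(\alpha_1,\alpha_2,\alpha_3)$ with $\alpha_1f+\alpha_2g+\alpha_3h=0$. *)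

theory Defs
  imports "HOL-Computational_Algebra.Polynomial" "HOL-Library.Poly_Mapping" "HOL-Library.Numeral_Type"
begin

text \<open>The polynomial ring R = K[w,x,y,z]: finitely supported maps from monomials
 (exponent vectors indexed by the 4-element type, variable 0 = w, 1 = x, 2 = y, 3 = z)
 to coefficients.\<close>
type_synonym 'a mpoly4 = "(4 \<Rightarrow>\<^sub>0 nat) \<Rightarrow>\<^sub>0 'a"

definition Var :: "4 \<Rightarrow> 'a::comm_semiring_1 mpoly4" where
  "Var i = Poly_Mapping.single (Poly_Mapping.single i 1) 1"

definition Const :: "'a::comm_semiring_1 \<Rightarrow> 'a mpoly4" where
  "Const c = Poly_Mapping.single 0 c"

definition mdeg :: "(4 \<Rightarrow>\<^sub>0 nat) \<Rightarrow> nat" where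
  "mdeg m = (\<Sum>i\<in>UNIV. Poly_Mapping.lookup m i)"

definition Rdeg :: "nat \<Rightarrow> 'a::comm_semiring_1 mpoly4 set" where
  "Rdeg d = {p. \<forall>m \<in> Poly_Mapping.keys p. mdeg m = d}"

definition kspan :: "'a::comm_semiring_1 mpoly4 set \<Rightarrow> 'a mpoly4 set" where
  "kspan S = {p. \<exists>F c. finite F \<and> F \<subseteq> S \<and> p = (\<Sum>q\<in>F. Const (c q) * q)}"

definition kindep :: "'a::comm_semiring_1 mpoly4 list \<Rightarrow> bool" where
  "kindep ps \<longleftrightarrow> (\<forall>c. (\<Sum>i<length ps. Const (c i) * ps ! i) = 0 \<longrightarrow> (\<forall>i<length ps. c i = 0))"

definition linrels :: "'a::comm_semiring_1 mpoly4 \<Rightarrow> 'a mpoly4 \<Rightarrow> 'a mpoly4 \<Rightarrow>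
    ('a mpoly4 \<times> 'a mpoly4 \<times> 'a mpoly4) set" where
  "linrels f g h = {(a1, a2, a3). a1 \<in> Rdeg 1 \<and> a2 \<in> Rdeg 1 \<and> a3 \<in> Rdeg 1 \<and>
                                 a1 * f + a2 * g + a3 * h = 0}"

definition one_dim_triples :: "('a::comm_semiring_1 mpoly4 \<times> 'a mpoly4 \<times> 'a mpoly4) set \<Rightarrow> bool" where
  "one_dim_triples S \<longleftrightarrow> (\<exists>r1 r2 r3. (r1, r2, r3) \<noteq> (0, 0, 0) \<and>
      S = {(Const c * r1, Const c * r2, Const c * r3) | c. True})"

end

theory Submission
  imports Defs
begin

abbreviation lk where "lk \<equiv> Poly_Mapping.lookup"
abbreviation ks where "ks \<equiv> Poly_Mapping.keys"
abbreviation sng where "sng \<equiv> Poly_Mapping.single"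

lemma lk_map: "lk (Poly_Mapping.map f p) k = (f (lk p k) when lk p k \<noteq> 0)"
  apply transfer apply simp done

lemma Const_mult: "Const a * Const b = (Const (a*b) :: 'a::comm_semiring_1 mpoly4)"
  by (simp add: Const_def mult_single)
lemma Const_add: "Const (a + b) = (Const a + Const b :: 'a::comm_semiring_1 mpoly4)"
  by (simp add: Const_def single_add)
lemma Const_one[simp]: "(Const 1 :: 'a::comm_semiring_1 mpoly4) = 1"
  by (simp add: Const_def one_poly_mapping.abs_eq single.abs_eq)
lemma Const_zero[simp]: "(Const 0 :: 'a::comm_semiring_1 mpoly4) = 0"
  by (simp add: Const_def)
lemma Const_uminus: "Const (- a) = (- Const a :: 'a::comm_ring_1 mpoly4)"
  by (simp add: Const_def single_uminus)
lemma Const_diff: "Const (a - b) = (Const a - Const b :: 'a::comm_ring_1 mpoly4)"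
  by (simp add: Const_def single_diff)
lemma lookup_Const_mult: "lk (Const c * p) m = c * lk (p :: 'a::comm_semiring_1 mpoly4) m"
  unfolding Const_def mult_map_scale_conv_mult[symmetric]
  by (simp add: lk_map when_def)
lemma Const_eq_0_iff[simp]: "(Const c = (0:: 'a::comm_semiring_1 mpoly4)) = (c = 0)"
  by (metis Const_def lookup_single_eq single_zero)

lemma expansion: "p = (\<Sum>m\<in>ks p. sng m (lk p m))"
proof (rule poly_mapping_eqI)
  fix k
  have "lk (\<Sum>m\<in>ks p. sng m (lk p m)) k = (\<Sum>m\<in>ks p. (lk p m when m = k))"
    by (simp add: lookup_sum lookup_single)
  also have "\<dots> = lk p k"
    by (cases "k \<in> ks p") (auto simp: when_def in_keys_iff)
  finally show "lk p k = lk (\<Sum>m\<in>ks p. sng m (lk p m)) k" by simp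
qed

lemma mdeg_add: "mdeg (a + b) = mdeg a + mdeg b"
  by (simp add: mdeg_def lookup_add sum.distrib)
lemma mdeg_single: "mdeg (sng i n) = n"
  by (simp add: mdeg_def lookup_single when_def)
lemma mdeg_zero[simp]: "mdeg 0 = 0"
  by (simp add: mdeg_def)

lemma Rdeg_iff: "p \<in> Rdeg d \<longleftrightarrow> (\<forall>m. lk p m \<noteq> 0 \<longrightarrow> mdeg m = d)"
  by (auto simp: Rdeg_def in_keys_iff)

lemma Rdeg_add: "p \<in> Rdeg d \<Longrightarrow> q \<in> Rdeg d \<Longrightarrow> p + q \<in> Rdeg d"
  unfolding Rdeg_iff by (metis add.right_neutral lookup_add)
lemma Rdeg_uminus: "p \<in> Rdeg d \<Longrightarrow> - (p::'a::comm_ring_1 mpoly4) \<in> Rdeg d"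
  by (auto simp: Rdeg_iff)
lemma Rdeg_diff: "p \<in> Rdeg d \<Longrightarrow> q \<in> Rdeg d \<Longrightarrow> (p::'a::comm_ring_1 mpoly4) - q \<in> Rdeg d"
  unfolding Rdeg_iff by (metis diff_self lookup_minus)
lemma Rdeg_zero[simp]: "0 \<in> Rdeg d"
  by (auto simp: Rdeg_iff)
lemma Rdeg_Const_mult: "p \<in> Rdeg d \<Longrightarrow> Const c * p \<in> Rdeg d"
  unfolding Rdeg_iff by (metis lookup_Const_mult mult_zero_right)

definition hp :: "nat \<Rightarrow> 'a::comm_semiring_1 mpoly4 \<Rightarrow> 'a mpoly4" where
  "hp d p = Abs_poly_mapping (\<lambda>m. if mdeg m = d then lk p m else 0)"

lemma lk_hp: "lk (hp d p) m = (if mdeg m = d then lk p m else 0)"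
proof -
  have "finite {m. (if mdeg m = d then lk p m else 0) \<noteq> 0}"
    by (rule finite_subset[of _ "ks p"]) (auto simp: in_keys_iff)
  then show ?thesis by (simp add: hp_def)
qed

lemma hp_add: "hp d (p + q) = hp d p + hp d q"
  by (rule poly_mapping_eqI) (simp add: lk_hp lookup_add)
lemma hp_zero[simp]: "hp d 0 = 0"
  by (rule poly_mapping_eqI) (simp add: lk_hp)
lemma hp_sum: "hp d (sum f A) = (\<Sum>a\<in>A. hp d (f a))"
  by (induction A rule: infinite_finite_induct) (auto simp: hp_add)
lemma hp_Rdeg: "hp d p \<in> Rdeg d"
  by (simp add: Rdeg_iff lk_hp)
lemma hp_id: "p \<in> Rdeg d \<Longrightarrow> hp d p = p"
  by (rule poly_mapping_eqI) (auto simp: lk_hp Rdeg_iff)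
lemma hp_single: "hp d (sng m c) = (if mdeg m = d then sng m c else 0)"
  by (rule poly_mapping_eqI) (auto simp: lk_hp lookup_single when_def)
lemma hp_Const_mult: "hp d (Const c * p) = Const c * hp d p"
  by (rule poly_mapping_eqI) (simp add: lk_hp lookup_Const_mult)
lemma hp_uminus: "hp d (- p) = - hp d (p::'a::comm_ring_1 mpoly4)"
  by (rule poly_mapping_eqI) (simp add: lk_hp)
lemma hp_diff: "hp d (p - q) = hp d p - hp d (q::'a::comm_ring_1 mpoly4)"
  by (rule poly_mapping_eqI) (simp add: lk_hp lookup_minus)

lemma Var_mult_expand: "Var j * q = (\<Sum>n\<in>ks q. sng (sng j (1::nat) + n) (lk q n))"
proof -
  have "Var j * q = Var j * (\<Sum>n\<in>ks q. sng n (lk q n))"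
    by (subst expansion[of q]) simp
  also have "\<dots> = (\<Sum>n\<in>ks q. sng (sng j (1::nat) + n) (lk q n))"
    by (simp add: sum_distrib_left Var_def mult_single)
  finally show ?thesis .
qed


lemma hp_Var_mult: "hp (Suc d) (Var j * q) = Var j * hp d q"
proof -
  have "hp (Suc d) (Var j * q) = (\<Sum>n\<in>ks q. if mdeg n = d then sng (sng j (1::nat) + n) (lk q n) else 0)"
    by (simp add: Var_mult_expand hp_sum hp_single mdeg_add mdeg_single cong: if_cong)
  also have "\<dots> = Var j * (\<Sum>n\<in>ks q. if mdeg n = d then sng n (lk q n) else 0)"
    by (simp add: sum_distrib_left Var_def mult_single if_distrib cong: if_cong)
  also have "(\<Sum>n\<in>ks q. if mdeg n = d then sng n (lk q n) else 0) = hp d q"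
    by (subst (2) expansion[of q]) (simp add: hp_sum hp_single)
  finally show ?thesis .
qed


definition coef :: "'a::comm_semiring_1 mpoly4 \<Rightarrow> 4 \<Rightarrow> 'a" where
  "coef p j = lk p (sng j 1)"

lemma Const_Var: "Const c * Var j = sng (sng j 1) c"
  by (simp add: Const_def Var_def mult_single)

lemma sng_eq_sng_iff[simp]: "(sng i (1::nat) = sng j 1) = (i = j)"
  by (metis lookup_single_eq lookup_single_not_eq zero_neq_one)
lemma sng_eq_sng_iff'[simp]: "(sng i (Suc 0) = sng j (Suc 0)) = (i = j)"
  by (metis One_nat_def sng_eq_sng_iff)

lemma mdeg1: assumes "mdeg m = 1" shows "\<exists>j. m = sng j 1"
proof -
  have s: "(\<Sum>i\<in>UNIV. lk m i) = 1" using assms by (simp add: mdeg_def)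
  obtain j where j: "lk m j \<noteq> 0"
    using s by (metis (no_types, lifting) sum.neutral zero_neq_one)
  have le: "lk m i \<le> 1" for i
  proof -
    have "(\<Sum>x\<in>{i}. lk m x) \<le> (\<Sum>x\<in>UNIV. lk m x)" by (rule sum_mono2) auto
    then show ?thesis using s by simp
  qed
  have j1: "lk m j = 1" using j le[of j] by simp
  have other: "lk m i = 0" if "i \<noteq> j" for i
  proof -
    have "(\<Sum>x\<in>{i,j}. lk m x) \<le> (\<Sum>x\<in>UNIV. lk m x)" by (rule sum_mono2) auto
    then have "lk m i + lk m j \<le> 1" using s that by simp
    then show ?thesis using j1 by simp
  qed
  have "m = sng j 1"
    by (rule poly_mapping_eqI) (auto simp: lookup_single when_def j1 other)
  then show ?thesis by blast
qed

lemma lin_repr: assumes "p \<in> Rdeg 1"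
  shows "p = (\<Sum>j\<in>UNIV. Const (coef p j) * Var j)"
proof (rule poly_mapping_eqI)
  fix m
  have "lk (\<Sum>j\<in>UNIV. Const (coef p j) * Var j) m = (\<Sum>j\<in>UNIV. (coef p j when sng j 1 = m))"
    by (simp add: Const_Var lookup_sum lookup_single)
  also have "\<dots> = lk p m"
  proof (cases "\<exists>i. m = sng i 1")
    case True
    then obtain i where i: "m = sng i 1" by blast
    have "(\<Sum>j\<in>UNIV. (coef p j when sng j 1 = m)) = (\<Sum>j\<in>UNIV. (if j = i then coef p j else 0))"
      by (rule sum.cong) (auto simp: i when_def sng_eq_sng_iff)
    also have "\<dots> = lk p m" by (simp add: coef_def i)
    finally show ?thesis .
  next
    case False
    then have "lk p m = 0" using assms mdeg1 by (auto simp: Rdeg_iff)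
    moreover have "(\<Sum>j\<in>UNIV. (coef p j when sng j 1 = m)) = 0"
      by (rule sum.neutral) (use False in \<open>auto simp: when_def\<close>)
    ultimately show ?thesis by simp
  qed
  finally show "lk p m = lk (\<Sum>j\<in>UNIV. Const (coef p j) * Var j) m" by simp
qed

lemma lin_nonzero_coef: assumes "p \<in> Rdeg 1" "p \<noteq> 0" shows "\<exists>i. coef p i \<noteq> 0"
  using lin_repr[OF assms(1)] assms(2) by (metis (no_types, lifting) Const_zero mult_zero_left sum.neutral)

lemma hp_lin_mult: assumes "u \<in> Rdeg 1" shows "hp (Suc d) (u * q) = u * hp d q"
proof -
  have "hp (Suc d) (u * q) = hp (Suc d) (\<Sum>j\<in>UNIV. Const (coef u j) * (Var j * q))"
    by (subst lin_repr[OF assms]) (simp add: sum_distrib_right mult.assoc)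
  also have "\<dots> = (\<Sum>j\<in>UNIV. Const (coef u j) * (Var j * hp d q))"
    by (simp add: hp_sum hp_Const_mult hp_Var_mult)
  also have "\<dots> = u * hp d q"
    by (subst (2) lin_repr[OF assms]) (simp add: sum_distrib_right mult.assoc)
  finally show ?thesis .
qed

lemma hp_lin_mult2: assumes "u \<in> Rdeg 1" shows "hp 2 (u * q) = u * hp 1 q"
  using hp_lin_mult[OF assms, of 1 q] by (simp add: numeral_2_eq_2)

lemma lin_quotient: assumes "u \<in> Rdeg 1" "p \<in> Rdeg 2" "p = u * q"
  shows "p = u * hp 1 q" "hp 1 q \<in> Rdeg 1"
  using hp_id[OF assms(2)] hp_lin_mult2[OF assms(1)] assms(3) hp_Rdeg by metis+

section \<open>Substitution\<close>

definition mnm :: "(4 \<Rightarrow> 'a::comm_semiring_1 mpoly4) \<Rightarrow> (4 \<Rightarrow>\<^sub>0 nat) \<Rightarrow> 'a mpoly4" where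
  "mnm \<sigma> m = (\<Prod>i\<in>UNIV. \<sigma> i ^ lk m i)"

definition subst :: "(4 \<Rightarrow> 'a::comm_semiring_1 mpoly4) \<Rightarrow> 'a mpoly4 \<Rightarrow> 'a mpoly4" where
  "subst \<sigma> p = (\<Sum>m\<in>ks p. Const (lk p m) * mnm \<sigma> m)"

lemma subst_gen: assumes "finite S" "ks p \<subseteq> S"
  shows "subst \<sigma> p = (\<Sum>m\<in>S. Const (lk p m) * mnm \<sigma> m)"
  unfolding subst_def
  by (rule sum.mono_neutral_left) (use assms in \<open>auto simp: in_keys_iff\<close>)

lemma subst_add: "subst \<sigma> (p + q) = subst \<sigma> p + subst \<sigma> q"
proof -
  let ?S = "ks p \<union> ks q"
  have "ks (p + q) \<subseteq> ?S" by (rule keys_add)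
  then have "subst \<sigma> (p + q) = (\<Sum>m\<in>?S. Const (lk (p+q) m) * mnm \<sigma> m)"
    by (intro subst_gen) auto
  also have "\<dots> = (\<Sum>m\<in>?S. Const (lk p m) * mnm \<sigma> m) + (\<Sum>m\<in>?S. Const (lk q m) * mnm \<sigma> m)"
    by (simp add: lookup_add Const_add distrib_right sum.distrib)
  also have "\<dots> = subst \<sigma> p + subst \<sigma> q"
    by (subst (1 2) subst_gen[of ?S]) auto
  finally show ?thesis .
qed

lemma subst_zero[simp]: "subst \<sigma> 0 = 0"
  by (simp add: subst_def)

lemma subst_sum: "subst \<sigma> (sum f A) = (\<Sum>a\<in>A. subst \<sigma> (f a))"
  by (induction A rule: infinite_finite_induct) (auto simp: subst_add)

lemma subst_uminus: "subst \<sigma> (- p) = - subst \<sigma> (p::'a::comm_ring_1 mpoly4)"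
  using subst_add[of \<sigma> p "-p"] by (simp add: eq_neg_iff_add_eq_0 add.commute)

lemma subst_diff: "subst \<sigma> (p - q) = subst \<sigma> p - subst \<sigma> (q::'a::comm_ring_1 mpoly4)"
  using subst_add[of \<sigma> p "-q"] by (simp add: subst_uminus)

lemma subst_single: "subst \<sigma> (sng m c) = Const c * mnm \<sigma> m"
  by (subst subst_gen[of "{m}"]) auto

lemma mnm_add: "mnm \<sigma> (m + n) = mnm \<sigma> m * mnm \<sigma> n"
  by (simp add: mnm_def lookup_add power_add prod.distrib)

lemma mnm_zero[simp]: "mnm \<sigma> 0 = 1"
  by (simp add: mnm_def)

lemma subst_mult: "subst \<sigma> (p * q) = subst \<sigma> p * subst \<sigma> q"
proof -
  have "p * q = (\<Sum>m\<in>ks p. sng m (lk p m)) * (\<Sum>n\<in>ks q. sng n (lk q n))"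
    using expansion[of p] expansion[of q] by simp
  also have "\<dots> = (\<Sum>m\<in>ks p. \<Sum>n\<in>ks q. sng (m + n) (lk p m * lk q n))"
    by (simp add: sum_product mult_single)
  finally have pq: "p * q = \<dots>" .
  have "subst \<sigma> (p * q) = (\<Sum>m\<in>ks p. \<Sum>n\<in>ks q. (Const (lk p m) * mnm \<sigma> m) * (Const (lk q n) * mnm \<sigma> n))"
    by (simp add: pq subst_sum subst_single mnm_add Const_mult[symmetric] ac_simps)
  also have "\<dots> = subst \<sigma> p * subst \<sigma> q"
    by (simp add: subst_def sum_product)
  finally show ?thesis .
qed

lemma subst_Const[simp]: "subst \<sigma> (Const c) = Const c"
  using subst_single[of \<sigma> 0 c] by (simp add: Const_def[symmetric])

lemma subst_Const_mult: "subst \<sigma> (Const c * p) = Const c * subst \<sigma> p"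
  by (simp add: subst_mult)

lemma mnm_Var_single: "mnm \<sigma> (sng i 1) = \<sigma> i"
proof -
  have "mnm \<sigma> (sng i 1) = (\<Prod>j\<in>UNIV. if j = i then \<sigma> j else 1)"
    unfolding mnm_def by (rule prod.cong) (auto simp: lookup_single when_def)
  also have "\<dots> = \<sigma> i" by simp
  finally show ?thesis by simp
qed

lemma subst_Var[simp]: "subst \<sigma> (Var i) = \<sigma> i"
  unfolding Var_def subst_single mnm_Var_single by simp

lemma subst_lin: assumes "p \<in> Rdeg 1"
  shows "subst \<sigma> p = (\<Sum>j\<in>UNIV. Const (coef p j) * \<sigma> j)"
  by (subst lin_repr[OF assms]) (simp add: subst_sum subst_Const_mult)

lemma sng_pow: "sng (sng i (1::nat)) (1::'a::comm_semiring_1) ^ k = sng (sng i k) 1"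
proof (induction k)
  case (Suc k)
  have "sng (sng i (1::nat)) (1::'a) ^ Suc k = sng (sng i 1) 1 * sng (sng i k) 1" using Suc by simp
  also have "\<dots> = sng (sng i (Suc k)) 1" by (simp add: mult_single single_add[symmetric])
  finally show ?case .
qed simp

lemma sng_prod: "(\<Prod>i\<in>A. sng (g i) (1::'a::comm_semiring_1)) = sng (\<Sum>i\<in>A. g i) 1"
  by (induction A rule: infinite_finite_induct) (auto simp: mult_single)

lemma sum_sng_m: "(\<Sum>i\<in>UNIV. sng i (lk m i)) = (m :: 4 \<Rightarrow>\<^sub>0 nat)"
  by (rule poly_mapping_eqI) (simp add: lookup_sum lookup_single when_def)

lemma mnm_Var: "mnm Var m = (sng m 1 :: 'a::comm_semiring_1 mpoly4)"
proof -
  have "mnm Var m = (\<Prod>i\<in>UNIV. sng (sng i (lk m i)) (1::'a))"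
    unfolding mnm_def Var_def sng_pow by simp
  also have "\<dots> = sng m 1" by (simp add: sng_prod sum_sng_m)
  finally show ?thesis .
qed

lemma subst_Var_id: "subst Var p = p"
proof -
  have "subst Var p = (\<Sum>m\<in>ks p. sng m (lk p m))"
    unfolding subst_def mnm_Var by (simp add: Const_def mult_single)
  then show ?thesis using expansion[of p] by simp
qed

lemma dvd_mult_diff: "(b::'a::comm_ring_1) dvd x - y \<Longrightarrow> b dvd x' - y' \<Longrightarrow> b dvd x*x' - y*y'"
proof -
  assume a: "b dvd x - y" "b dvd x' - y'"
  have "x*x' - y*y' = x*(x' - y') + (x - y)*y'" by (simp add: algebra_simps)
  then show ?thesis using a by (simp add: dvd_add dvd_mult dvd_mult2)
qed

lemma dvd_pow_diff: "(b::'a::comm_ring_1) dvd x - y \<Longrightarrow> b dvd x^k - y^k"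
  by (induction k) (auto intro: dvd_mult_diff)

lemma dvd_prod_diff: "(\<And>i. i \<in> A \<Longrightarrow> (b::'a::comm_ring_1) dvd f i - g i) \<Longrightarrow> b dvd prod f A - prod g A"
  by (induction A rule: infinite_finite_induct) (auto intro: dvd_mult_diff)

lemma subst_dvd: assumes "\<And>j. b dvd Var j - \<sigma> j"
  shows "b dvd p - subst \<sigma> (p::'a::comm_ring_1 mpoly4)"
proof -
  have "p - subst \<sigma> p = subst Var p - subst \<sigma> p" by (simp add: subst_Var_id)
  also have "\<dots> = (\<Sum>m\<in>ks p. Const (lk p m) * (mnm Var m - mnm \<sigma> m))"
    by (simp add: subst_def sum_subtractf algebra_simps)
  finally have eq: "p - subst \<sigma> p = \<dots>" .
  have "b dvd mnm Var m - mnm \<sigma> m" for m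
    unfolding mnm_def by (rule dvd_prod_diff) (rule dvd_pow_diff, rule assms)
  then show ?thesis unfolding eq by (auto intro!: dvd_sum dvd_mult)
qed

definition kill :: "'a::field mpoly4 \<Rightarrow> 4 \<Rightarrow> 4 \<Rightarrow> 'a mpoly4" where
  "kill b i = (\<lambda>j. Var j - (if j = i then Const (1 / coef b i) * b else 0))"

lemma kill_lin: assumes "a \<in> Rdeg 1"
  shows "subst (kill b i) a = a - Const (coef a i / coef b i) * b"
proof -
  let ?X = "Const (1 / coef b i) * b"
  have "subst (kill b i) a = (\<Sum>j\<in>UNIV. Const (coef a j) * Var j - Const (coef a j) * (if j = i then ?X else 0))"
    unfolding subst_lin[OF assms] kill_def by (simp add: right_diff_distrib)
  also have "\<dots> = (\<Sum>j\<in>UNIV. Const (coef a j) * Var j) - (\<Sum>j\<in>UNIV. Const (coef a j) * (if j = i then ?X else 0))"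
    by (simp add: sum_subtractf)
  also have "(\<Sum>j\<in>UNIV. Const (coef a j) * (if j = i then ?X else 0)) = (\<Sum>j\<in>UNIV. if j = i then Const (coef a j) * ?X else 0)"
    by (rule sum.cong) auto
  also have "\<dots> = Const (coef a i) * ?X" by simp
  finally show ?thesis
    using lin_repr[OF assms] by (simp add: mult.assoc[symmetric] Const_mult)
qed

lemma kill_dvd: "b dvd p - subst (kill b i) p"
  by (rule subst_dvd) (simp add: kill_def)

lemma kill_self: assumes "b \<in> Rdeg 1" "coef b i \<noteq> 0"
  shows "subst (kill b i) b = 0"
  using kill_lin[OF assms(1), of b i] assms(2) by simp

definition indep2 :: "'a::field mpoly4 \<Rightarrow> 'a mpoly4 \<Rightarrow> bool" where
  "indep2 a b \<longleftrightarrow> (\<forall>x y. Const x * a + Const y * b = 0 \<longrightarrow> x = 0 \<and> y = 0)"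
definition indep3 :: "'a::field mpoly4 \<Rightarrow> 'a mpoly4 \<Rightarrow> 'a mpoly4 \<Rightarrow> bool" where
  "indep3 a b c \<longleftrightarrow> (\<forall>x y z. Const x * a + Const y * b + Const z * c = 0 \<longrightarrow> x = 0 \<and> y = 0 \<and> z = 0)"

lemma kindep_inst: assumes k: "kindep ps" and s: "(\<Sum>i<length ps. Const (c i) * ps ! i) = 0"
  shows "\<And>i. i < length ps \<Longrightarrow> c i = 0"
proof -
  have "\<forall>c. (\<Sum>i<length ps. Const (c i) * ps ! i) = 0 \<longrightarrow> (\<forall>i<length ps. c i = 0)"
    using k unfolding kindep_def .
  from this[THEN spec, of c] s show "\<And>i. i < length ps \<Longrightarrow> c i = 0" by blast
qed

lemma kindep2_iff: "kindep [a, b] \<longleftrightarrow> indep2 a b"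
proof
  assume k: "kindep [a, b]"
  show "indep2 a b" unfolding indep2_def
  proof (intro allI impI)
    fix x y assume "Const x * a + Const y * b = 0"
    then have "(\<Sum>i<length [a,b]. Const ((\<lambda>i. if i = 0 then x else y) i) * [a,b] ! i) = 0"
      by (simp add: numeral_2_eq_2)
    note H = kindep_inst[OF k this]
    show "x = 0 \<and> y = 0" using H[of 0] H[of 1] by simp
  qed
next
  assume i: "indep2 a b"
  show "kindep [a, b]" unfolding kindep_def
  proof (intro allI impI)
    fix c i assume s: "(\<Sum>i<length [a, b]. Const (c i) * [a, b] ! i) = 0" and il: "i < length [a,b]"
    have "Const (c 0) * a + Const (c 1) * b = 0" using s by (simp add: numeral_2_eq_2)
    then have "c 0 = 0 \<and> c 1 = 0" using i unfolding indep2_def by blast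
    moreover have "i = 0 \<or> i = 1" using il by auto
    ultimately show "c i = 0" by auto
  qed
qed

lemma kindep3_iff: "kindep [a, b, c] \<longleftrightarrow> indep3 a b c"
proof
  assume k: "kindep [a, b, c]"
  show "indep3 a b c" unfolding indep3_def
  proof (intro allI impI)
    fix x y z assume "Const x * a + Const y * b + Const z * c = 0"
    then have "(\<Sum>i<length [a,b,c]. Const ((\<lambda>i. if i = 0 then x else if i = 1 then y else z) i) * [a,b,c] ! i) = 0"
      by (simp add: eval_nat_numeral add.assoc)
    note H = kindep_inst[OF k this]
    show "x = 0 \<and> y = 0 \<and> z = 0" using H[of 0] H[of 1] H[of 2] by simp
  qed
next
  assume i: "indep3 a b c"
  show "kindep [a, b, c]" unfolding kindep_def
  proof (intro allI impI)
    fix d i assume s: "(\<Sum>i<length [a, b, c]. Const (d i) * [a, b, c] ! i) = 0" and il: "i < length [a,b,c]"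
    have "Const (d 0) * a + Const (d 1) * b + Const (d 2) * c = 0" using s by (simp add: eval_nat_numeral add.assoc)
    then have "d 0 = 0 \<and> d 1 = 0 \<and> d 2 = 0" using i unfolding indep3_def by blast
    moreover have "i = 0 \<or> i = 1 \<or> i = 2" using il by auto
    ultimately show "d i = 0" by auto
  qed
qed

lemma kindep4I: assumes "\<And>x y z u. Const x * a + Const y * b + Const z * c + Const u * d = 0 \<Longrightarrow> x = 0 \<and> y = 0 \<and> z = 0 \<and> u = 0"
  shows "kindep [a, b, c, d]"
  unfolding kindep_def
proof (intro allI impI)
  fix e i assume s: "(\<Sum>i<length [a, b, c, d]. Const (e i) * [a, b, c, d] ! i) = 0" and il: "i < length [a,b,c,d]"
  have "Const (e 0) * a + Const (e 1) * b + Const (e 2) * c + Const (e 3) * d = 0"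
    using s by (simp add: eval_nat_numeral add.assoc)
  then have "e 0 = 0 \<and> e 1 = 0 \<and> e 2 = 0 \<and> e 3 = 0" using assms by blast
  moreover have "i = 0 \<or> i = 1 \<or> i = 2 \<or> i = 3" using il by auto
  ultimately show "e i = 0" by auto
qed

lemma indep2_nz: assumes "indep2 a b" shows "a \<noteq> 0" "b \<noteq> 0"
proof -
  have H: "\<And>x y. Const x * a + Const y * b = 0 \<Longrightarrow> x = 0 \<and> y = 0" using assms unfolding indep2_def by blast
  show "a \<noteq> 0"
  proof
    assume "a = 0" then have "Const 1 * a + Const 0 * b = 0" by simp
    from H[OF this] show False by simp
  qed
  show "b \<noteq> 0"
  proof
    assume "b = 0" then have "Const 0 * a + Const 1 * b = 0" by simp
    from H[OF this] show False by simp
  qed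
qed

lemma indep2_comb_nz: assumes "indep2 a b" shows "a - Const k * b \<noteq> 0"
proof
  assume "a - Const k * b = 0"
  then have "Const 1 * a + Const (- k) * b = 0" by (simp add: Const_uminus)
  moreover have H: "\<And>x y. Const x * a + Const y * b = 0 \<Longrightarrow> x = 0 \<and> y = 0" using assms unfolding indep2_def by blast
  ultimately show False by (metis one_neq_zero)
qed

lemma lemP: assumes "a \<in> Rdeg 1" "b \<in> Rdeg 1" "indep2 a b" "a * p + b * q = 0"
  shows "b dvd p"
proof -
  have "b \<noteq> 0" using indep2_nz[OF assms(3)] by simp
  then obtain i where bi: "coef b i \<noteq> 0" using lin_nonzero_coef assms(2) by blast
  let ?s = "subst (kill b i)"
  have "?s (a * p + b * q) = 0" using assms(4) by simp
  then have "?s a * ?s p = 0" by (simp add: subst_add subst_mult kill_self[OF assms(2) bi])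
  moreover have "?s a \<noteq> 0" unfolding kill_lin[OF assms(1)] by (rule indep2_comb_nz[OF assms(3)])
  ultimately have "?s p = 0" by simp
  then show ?thesis using kill_dvd[of b p i] by simp
qed

lemma lemK: assumes a: "a \<in> Rdeg 1" and b: "b \<in> Rdeg 1" and c: "c \<in> Rdeg 1" and ind: "indep3 a b c"
  and f: "f \<in> Rdeg 2" and g: "g \<in> Rdeg 2" and h: "h \<in> Rdeg 2" and rel: "a * f + b * g + c * h = 0"
  shows "\<exists>m s t. m \<in> Rdeg 1 \<and> s \<in> Rdeg 1 \<and> t \<in> Rdeg 1 \<and> f = b * m + c * s \<and> g = c * t - a * m \<and> h = - (a * s) - b * t"
proof -
  have H3: "\<And>x y z. Const x * a + Const y * b + Const z * c = 0 \<Longrightarrow> x = 0 \<and> y = 0 \<and> z = 0"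
    using ind unfolding indep3_def by blast
  have "c \<noteq> 0"
  proof
    assume "c = 0" then have "Const 0 * a + Const 0 * b + Const 1 * c = 0" by simp
    from H3[OF this] show False by simp
  qed
  then obtain i where ci: "coef c i \<noteq> 0" using lin_nonzero_coef c by blast
  let ?s = "subst (kill c i)"
  define ka where "ka = coef a i / coef c i"
  define kb where "kb = coef b i / coef c i"
  have sa: "?s a = a - Const ka * c" unfolding ka_def by (rule kill_lin[OF a])
  have sb: "?s b = b - Const kb * c" unfolding kb_def by (rule kill_lin[OF b])
  have sc: "?s c = 0" by (rule kill_self[OF c ci])
  have ind2: "indep2 (?s a) (?s b)" unfolding indep2_def sa sb
  proof (intro allI impI)
    fix x y assume "Const x * (a - Const ka * c) + Const y * (b - Const kb * c) = 0"
    moreover have e0: "Const (- (x * ka + y * kb)) = (- (Const x * Const ka) - Const y * Const kb :: 'a mpoly4)"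
      unfolding Const_mult Const_uminus[symmetric] Const_diff[symmetric] by (simp add: algebra_simps)
    have e: "Const (- (x * ka + y * kb)) * c = - (Const x * (Const ka * c)) - Const y * (Const kb * c)"
      unfolding e0 by (simp add: algebra_simps)
    ultimately have "Const x * a + Const y * b + Const (- (x * ka + y * kb)) * c = 0"
      unfolding e by (simp add: algebra_simps)
    then show "x = 0 \<and> y = 0" using H3 by blast
  qed
  have sa1: "?s a \<in> Rdeg 1" unfolding sa by (intro Rdeg_diff a Rdeg_Const_mult c)
  have sb1: "?s b \<in> Rdeg 1" unfolding sb by (intro Rdeg_diff b Rdeg_Const_mult c)
  have "?s (a * f + b * g + c * h) = 0" using rel by simp
  then have srel: "?s a * ?s f + ?s b * ?s g = 0" by (simp add: subst_add subst_mult sc)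
  then obtain m0 where m0: "?s f = ?s b * m0" using lemP[OF sa1 sb1 ind2] by (metis dvdE)
  obtain s0 where s0: "f - ?s f = c * s0" using kill_dvd[of c f i] by (metis dvdE)
  obtain t0 where t0: "g - ?s g = c * t0" using kill_dvd[of c g i] by (metis dvdE)
  define s1 where "s1 = s0 - Const kb * m0"
  have f1: "f = b * m0 + c * s1"
    using s0 m0 unfolding sb s1_def by (simp add: algebra_simps)
  have "?s b * (?s a * m0 + ?s g) = 0" using srel m0 by (simp add: algebra_simps)
  moreover have "?s b \<noteq> 0" using indep2_nz[OF ind2] by simp
  ultimately have "?s g = - (?s a * m0)" by (simp add: eq_neg_iff_add_eq_0 add.commute)
  define t1 where "t1 = t0 + Const ka * m0"
  have g1: "g = c * t1 - a * m0"
    using t0 \<open>?s g = _\<close> unfolding sa t1_def by (simp add: algebra_simps)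
  have "c * (h + a * s1 + b * t1) = 0"
    using rel unfolding f1 g1 by (simp add: algebra_simps)
  then have X: "h + a * s1 + b * t1 = 0" using \<open>c \<noteq> 0\<close> by simp
  have "h = (h + a * s1 + b * t1) - a * s1 - b * t1" by simp
  also have "\<dots> = - (a * s1) - b * t1" using X by simp
  finally have h1: "h = - (a * s1) - b * t1" .
  have "f = hp 2 f" using hp_id[OF f] by simp
  also have "\<dots> = b * hp 1 m0 + c * hp 1 s1" unfolding f1 hp_add hp_lin_mult2[OF b] hp_lin_mult2[OF c] ..
  finally have F: "f = b * hp 1 m0 + c * hp 1 s1" .
  have "g = hp 2 g" using hp_id[OF g] by simp
  also have "\<dots> = c * hp 1 t1 - a * hp 1 m0" unfolding g1 hp_diff hp_lin_mult2[OF a] hp_lin_mult2[OF c] ..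
  finally have G: "g = c * hp 1 t1 - a * hp 1 m0" .
  have "h = hp 2 h" using hp_id[OF h] by simp
  also have "\<dots> = - (a * hp 1 s1) - b * hp 1 t1" unfolding h1 hp_diff hp_uminus hp_lin_mult2[OF a] hp_lin_mult2[OF b] ..
  finally have H: "h = - (a * hp 1 s1) - b * hp 1 t1" .
  show ?thesis using F G H hp_Rdeg by blast
qed

interpretation vs: vector_space "\<lambda>c p. Const c * (p :: 'a::field mpoly4)"
  by unfold_locales (simp_all add: distrib_left Const_add distrib_right Const_mult[symmetric] mult.assoc)

lemma kspan_eq: "kspan S = vs.span (S :: 'a::field mpoly4 set)"
  unfolding kspan_def vs.span_explicit by blast

lemma Var_Rdeg1: "Var i \<in> Rdeg 1"
  by (auto simp: Rdeg_iff Var_def lookup_single when_def mdeg_single)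

lemma lk_Var: "lk (Var i :: 'a::comm_semiring_1 mpoly4) (sng j 1) = (if i = j then 1 else 0)"
  by (simp add: Var_def lookup_single when_def)

lemma lk_Var'[simp]: "lk (Var i :: 'a::comm_semiring_1 mpoly4) (sng j (Suc 0)) = (if i = j then 1 else 0)"
  by (simp add: Var_def lookup_single when_def)

lemma lk_Var_comb: "lk (\<Sum>i\<in>UNIV. Const (u i) * Var i :: 'a::comm_semiring_1 mpoly4) (sng j 1) = u j"
  by (simp add: lookup_sum lookup_Const_mult lk_Var if_distrib cong: if_cong)

lemma inj_Var: "inj (Var :: 4 \<Rightarrow> 'a::comm_semiring_1 mpoly4)"
proof
  fix i j assume "(Var i :: 'a mpoly4) = Var j"
  then have "lk (Var i :: 'a mpoly4) (sng j 1) = lk (Var j :: 'a mpoly4) (sng j 1)" by simp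
  then show "i = j" by (simp add: lk_Var split: if_splits)
qed

lemma indep_Vars: "vs.independent (range (Var :: 4 \<Rightarrow> 'a::field mpoly4))"
proof
  assume "vs.dependent (range (Var :: 4 \<Rightarrow> 'a mpoly4))"
  then obtain u where u: "\<exists>v\<in>range Var. u v \<noteq> 0" "(\<Sum>v\<in>range (Var :: 4 \<Rightarrow> 'a mpoly4). Const (u v) * v) = 0"
    using vs.dependent_finite[of "range (Var :: 4 \<Rightarrow> 'a mpoly4)"] by auto
  have "(\<Sum>i\<in>UNIV. Const (u (Var i)) * (Var i :: 'a mpoly4)) = 0"
    using u(2) by (simp add: sum.reindex[OF inj_Var])
  then have "u (Var j) = 0" for j using lk_Var_comb[of "\<lambda>i. u (Var i)" j] by simp
  then show False using u(1) by auto
qed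

lemma exists_Var_notin: assumes "finite S" "card S < 4"
  shows "\<exists>i. (Var i :: 'a::field mpoly4) \<notin> vs.span S"
proof (rule ccontr)
  assume "\<not> ?thesis"
  then have "range (Var :: 4 \<Rightarrow> 'a mpoly4) \<subseteq> vs.span S" by auto
  from vs.independent_span_bound[OF assms(1) indep_Vars this]
  have "card (range (Var :: 4 \<Rightarrow> 'a mpoly4)) \<le> card S" by simp
  moreover have "card (range (Var :: 4 \<Rightarrow> 'a mpoly4)) = 4"
    using card_image[OF inj_Var] by simp
  ultimately show False using assms(2) by simp
qed

lemma ext3: assumes "indep3 a b (c :: 'a::field mpoly4)"
  shows "\<exists>d \<in> Rdeg 1. kindep [a, b, c, d]"
proof -
  have "card {a, b, c} < 4" using card_length[of "[a,b,c]"] by simp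
  then obtain i where i: "(Var i :: 'a mpoly4) \<notin> vs.span {a, b, c}"
    using exists_Var_notin[of "{a,b,c}"] by auto
  have "kindep [a, b, c, Var i]"
  proof (rule kindep4I)
    fix x y z u assume e: "Const x * a + Const y * b + Const z * c + Const u * Var i = 0"
    have "u = 0"
    proof (rule ccontr)
      assume u: "u \<noteq> 0"
      have "Const u * Var i = (Const x * a + Const y * b + Const z * c + Const u * Var i) - (Const x * a + Const y * b + Const z * c)"
        by simp
      also have "\<dots> = - (Const x * a + Const y * b + Const z * c)" using e by simp
      finally have "Const u * Var i = - (Const x * a + Const y * b + Const z * c)" .
      then have "Var i = Const (1/u) * (- (Const x * a + Const y * b + Const z * c))"
        using u by (metis Const_mult Const_one mult.assoc mult_1 divide_self_if times_divide_eq_left mult.commute)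
      moreover have "Const (1/u) * (- (Const x * a + Const y * b + Const z * c)) \<in> vs.span {a, b, c}"
        by (intro vs.span_scale vs.span_neg vs.span_add vs.span_base) auto
      ultimately show False using i by simp
    qed
    then show "x = 0 \<and> y = 0 \<and> z = 0 \<and> u = 0" using e assms unfolding indep3_def by auto
  qed
  then show ?thesis using Var_Rdeg1 by blast
qed

lemma ext2: assumes "indep2 a (b :: 'a::field mpoly4)"
  shows "\<exists>c \<in> Rdeg 1. indep3 a b c"
proof -
  have "card {a, b} < 4" using card_length[of "[a,b]"] by simp
  then obtain i where i: "(Var i :: 'a mpoly4) \<notin> vs.span {a, b}"
    using exists_Var_notin[of "{a,b}"] by auto
  have "indep3 a b (Var i)" unfolding indep3_def
  proof (intro allI impI)
    fix x y u assume e: "Const x * a + Const y * b + Const u * Var i = 0"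
    have "u = 0"
    proof (rule ccontr)
      assume u: "u \<noteq> 0"
      have "Const u * Var i = (Const x * a + Const y * b + Const u * Var i) - (Const x * a + Const y * b)"
        by simp
      also have "\<dots> = - (Const x * a + Const y * b)" using e by simp
      finally have "Const u * Var i = - (Const x * a + Const y * b)" .
      then have "Var i = Const (1/u) * (- (Const x * a + Const y * b))"
        using u by (metis Const_mult Const_one mult.assoc mult_1 divide_self_if times_divide_eq_left mult.commute)
      moreover have "Const (1/u) * (- (Const x * a + Const y * b)) \<in> vs.span {a, b}"
        by (intro vs.span_scale vs.span_neg vs.span_add vs.span_base) auto
      ultimately show False using i by simp
    qed
    then show "x = 0 \<and> y = 0 \<and> u = 0" using e assms unfolding indep2_def by auto
  qed
  then show ?thesis using Var_Rdeg1 by blast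
qed

lemma Const_Const_mult: "Const a * (Const b * p) = Const (a * b) * (p :: 'a::comm_semiring_1 mpoly4)"
  by (simp add: mult.assoc[symmetric] Const_mult)

lemma add3_solve: "A + B + C = (0::'b::ab_group_add) \<Longrightarrow> C = - (A + B)"
proof -
  assume "A + B + C = 0"
  then have "C + (A + B) = 0" by (simp add: ac_simps)
  then show "C = - (A + B)" by (rule eq_neg_iff_add_eq_0[THEN iffD2])
qed

lemma span2_obtain: assumes "x \<in> vs.span {a, b :: 'a::field mpoly4}"
  shows "\<exists>s t. x = Const s * a + Const t * b"
proof -
  obtain k where "x - Const k * a \<in> vs.span {b}" using assms vs.span_breakdown_eq by blast
  then obtain t where "x - Const k * a = Const t * b" using vs.span_singleton by blast
  then have "x = Const k * a + Const t * b" by (simp add: algebra_simps)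
  then show ?thesis by blast
qed

lemma in_span2: "Const s * a + Const t * b \<in> vs.span {a, b :: 'a::field mpoly4}"
  by (intro vs.span_add vs.span_scale vs.span_base) auto

lemma solve3: assumes "Const x * a + Const y * b + Const z * c = (0 :: 'a::field mpoly4)" "z \<noteq> 0"
  shows "c = Const (- x / z) * a + Const (- y / z) * b"
proof -
  have "c = Const (1 / z) * (Const z * c)" using assms(2) by (simp add: Const_Const_mult)
  also have "Const z * c = - (Const x * a + Const y * b)"
    using add3_solve[OF assms(1)] .
  also have "Const (1 / z) * (- (Const x * a + Const y * b)) = - (Const (1 / z) * (Const x * a)) + - (Const (1 / z) * (Const y * b))"
    by (simp add: algebra_simps Const_Const_mult)
  also have "- (Const (1 / z) * (Const x * a)) = Const (- x / z) * a"
    by (simp add: Const_Const_mult Const_uminus)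
  also have "- (Const (1 / z) * (Const y * b)) = Const (- y / z) * b"
    by (simp add: Const_Const_mult Const_uminus)
  finally show ?thesis .
qed

lemma indep3_perm1: "indep3 f g h \<Longrightarrow> indep3 f h g"
  unfolding indep3_def
proof (intro allI impI)
  fix x y z assume i: "\<forall>x y z. Const x * f + Const y * g + Const z * h = 0 \<longrightarrow> x = 0 \<and> y = 0 \<and> z = 0"
    and e: "Const x * f + Const y * h + Const z * g = 0"
  from e have "Const x * f + Const z * g + Const y * h = 0" by (simp add: ac_simps)
  then show "x = 0 \<and> y = 0 \<and> z = 0" using i by blast
qed

lemma indep3_perm2: "indep3 f g h \<Longrightarrow> indep3 g h f"
  unfolding indep3_def
proof (intro allI impI)
  fix x y z assume i: "\<forall>x y z. Const x * f + Const y * g + Const z * h = 0 \<longrightarrow> x = 0 \<and> y = 0 \<and> z = 0"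
    and e: "Const x * g + Const y * h + Const z * f = 0"
  from e have "Const z * f + Const x * g + Const y * h = 0" by (simp add: ac_simps)
  then show "x = 0 \<and> y = 0 \<and> z = 0" using i by blast
qed

lemma indep3_f_nz: assumes "indep3 f g h" shows "f + Const c * h \<noteq> 0"
proof
  assume "f + Const c * h = 0"
  then have "Const 1 * f + Const 0 * g + Const c * h = 0" by simp
  then have "(1::'a) = 0 \<and> (0::'a) = 0 \<and> c = 0" using assms unfolding indep3_def by blast
  then show False by simp
qed

lemma indep3_g_nz: assumes "indep3 f g h" shows "g + Const c * h \<noteq> 0"
proof
  assume "g + Const c * h = 0"
  then have "Const 0 * f + Const 1 * g + Const c * h = 0" by simp
  then have "(1::'a) = 0 \<and> (0::'a) = 0 \<and> c = 0" using assms unfolding indep3_def by blast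
  then show False by simp
qed

lemma solve2: assumes "Const x * a + Const z * c = (0 :: 'a::field mpoly4)" "z \<noteq> 0"
  shows "c = Const (- x / z) * a"
  using solve3[of x a 0 0 z c] assms by simp

lemma kspan_eqI: assumes "A \<subseteq> vs.span B" "B \<subseteq> vs.span A"
  shows "kspan A = kspan (B :: 'a::field mpoly4 set)"
  unfolding kspan_eq using assms vs.span_eq by blast

definition PART1 :: "'a::field mpoly4 set \<Rightarrow> 'a mpoly4 \<Rightarrow> 'a mpoly4 \<Rightarrow> 'a mpoly4 \<Rightarrow> 'a mpoly4 \<Rightarrow> bool" where
  "PART1 V l u1 u2 h' \<longleftrightarrow> l \<in> Rdeg 1 \<and> u1 \<in> Rdeg 1 \<and> u2 \<in> Rdeg 1 \<and> kindep [u1, u2] \<and>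
            h' \<in> Rdeg 2 \<and> V = kspan {l * u1, l * u2, h'} \<and>
            \<not> l dvd h' \<and> (\<forall>u \<in> kspan {u1, u2}. u \<noteq> 0 \<longrightarrow> \<not> u dvd h')"

definition PART2 :: "'a::field mpoly4 set \<Rightarrow> bool" where
  "PART2 V \<longleftrightarrow> (\<exists>w x y z h'. w \<in> Rdeg 1 \<and> x \<in> Rdeg 1 \<and> y \<in> Rdeg 1 \<and> z \<in> Rdeg 1 \<and>
            kindep [w, x, y, z] \<and> h' \<in> Rdeg 2 \<and>
            ((V = kspan {x * w, y * w, h'} \<and> \<not> w dvd h' \<and>
                (\<forall>u \<in> kspan {x, y}. u \<noteq> 0 \<longrightarrow> \<not> u dvd h')) \<or>
             (V = kspan {w * w, w * x, h'} \<and>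
                (\<forall>u \<in> kspan {w, x}. u \<noteq> 0 \<longrightarrow> \<not> u dvd h'))))"

lemma lemQ:
  fixes l u1 u2 h' :: "'a::field mpoly4"
  assumes l: "l \<in> Rdeg 1" and u1: "u1 \<in> Rdeg 1" and u2: "u2 \<in> Rdeg 1" and ind: "indep2 u1 u2"
    and ldef: "l = Const s * u1 + Const t * u2" and s: "s \<noteq> 0" and h': "h' \<in> Rdeg 2"
    and ND: "\<forall>u \<in> kspan {u1, u2}. u \<noteq> 0 \<longrightarrow> \<not> u dvd h'"
  shows "PART2 (kspan {l * u1, l * u2, h'})"
proof -
  have ind2: "indep2 l u2" unfolding indep2_def
  proof (intro allI impI)
    fix \<alpha> \<beta> assume e: "Const \<alpha> * l + Const \<beta> * u2 = 0"
    have "Const (\<alpha> * s) * u1 + Const (\<alpha> * t + \<beta>) * u2 = Const \<alpha> * l + Const \<beta> * u2"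
      unfolding ldef by (simp add: algebra_simps Const_add Const_mult)
    then have "Const (\<alpha> * s) * u1 + Const (\<alpha> * t + \<beta>) * u2 = 0" using e by simp
    then have "\<alpha> * s = 0 \<and> \<alpha> * t + \<beta> = 0" using ind unfolding indep2_def by blast
    then show "\<alpha> = 0 \<and> \<beta> = 0" using s by auto
  qed
  obtain y where y: "y \<in> Rdeg 1" "indep3 l u2 y" using ext2[OF ind2] by blast
  obtain z where z: "z \<in> Rdeg 1" "kindep [l, u2, y, z]" using ext3[OF y(2)] by blast
  have ll: "l * l = Const s * (l * u1) + Const t * (l * u2)"
  proof -
    have "l * l = l * (Const s * u1 + Const t * u2)" using ldef by simp
    also have "\<dots> = Const s * (l * u1) + Const t * (l * u2)" by (simp add: algebra_simps)
    finally show ?thesis .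
  qed
  have lu1: "l * u1 = Const (1 / s) * (l * l) - Const (t / s) * (l * u2)"
    unfolding ll using s by (simp add: algebra_simps Const_mult)
  have V: "kspan {l * u1, l * u2, h'} = kspan {l * l, l * u2, h'}"
  proof (rule kspan_eqI)
    have "l * u1 \<in> vs.span {l * l, l * u2, h'}"
      unfolding lu1 by (intro vs.span_diff vs.span_scale vs.span_base) auto
    moreover have "l * u2 \<in> vs.span {l * l, l * u2, h'}" "h' \<in> vs.span {l * l, l * u2, h'}"
      by (auto intro: vs.span_base)
    ultimately show "{l * u1, l * u2, h'} \<subseteq> vs.span {l * l, l * u2, h'}" by auto
    have "l * l \<in> vs.span {l * u1, l * u2, h'}"
      unfolding ll by (intro vs.span_add vs.span_scale vs.span_base) auto
    moreover have "l * u2 \<in> vs.span {l * u1, l * u2, h'}" "h' \<in> vs.span {l * u1, l * u2, h'}"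
      by (auto intro: vs.span_base)
    ultimately show "{l * l, l * u2, h'} \<subseteq> vs.span {l * u1, l * u2, h'}" by auto
  qed
  have sub: "kspan {l, u2} \<subseteq> kspan {u1, u2}"
  proof -
    have "{l, u2} \<subseteq> vs.span {u1, u2}" using ldef in_span2[of s u1 t u2]
      by (auto intro: vs.span_base)
    then have "vs.span {l, u2} \<subseteq> vs.span (vs.span {u1, u2})" by (rule vs.span_mono)
    then show ?thesis unfolding kspan_eq vs.span_span .
  qed
  have "kspan {l * u1, l * u2, h'} = kspan {l * l, l * u2, h'} \<and>
                (\<forall>u \<in> kspan {l, u2}. u \<noteq> 0 \<longrightarrow> \<not> u dvd h')"
    using V sub ND by blast
  then show ?thesis unfolding PART2_def using l u2 y z h' by blast
qed

lemma indep2_swap: "indep2 a b \<Longrightarrow> indep2 b a"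
  unfolding indep2_def
proof (intro allI impI)
  fix x y assume i: "\<forall>x y. Const x * a + Const y * b = 0 \<longrightarrow> x = 0 \<and> y = 0" and e: "Const x * b + Const y * a = 0"
  from e have "Const y * a + Const x * b = 0" by (simp add: add.commute)
  then show "x = 0 \<and> y = 0" using i by blast
qed

lemma part2_of_part1:
  assumes P: "PART1 V l u1 u2 h'" and lnz: "l \<noteq> 0"
  shows "PART2 V"
proof -
  have l: "l \<in> Rdeg 1" and u1: "u1 \<in> Rdeg 1" and u2: "u2 \<in> Rdeg 1" and ind: "indep2 u1 u2"
    and h': "h' \<in> Rdeg 2" and V: "V = kspan {l * u1, l * u2, h'}" and ndl: "\<not> l dvd h'"
    and ND: "\<forall>u \<in> kspan {u1, u2}. u \<noteq> 0 \<longrightarrow> \<not> u dvd h'"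
    using P unfolding PART1_def kindep2_iff by auto
  show ?thesis
  proof (cases "indep3 l u1 u2")
    case True
    obtain z where z: "z \<in> Rdeg 1" "kindep [l, u1, u2, z]" using ext3[OF True] by blast
    have "V = kspan {u1 * l, u2 * l, h'}" using V by (simp add: mult.commute)
    then show ?thesis unfolding PART2_def using l u1 u2 z h' ndl ND by blast
  next
    case False
    then obtain a b c where e: "Const a * l + Const b * u1 + Const c * u2 = 0" and nz: "\<not> (a = 0 \<and> b = 0 \<and> c = 0)"
      unfolding indep3_def by blast
    have "a \<noteq> 0"
    proof
      assume "a = 0"
      then have "Const b * u1 + Const c * u2 = 0" using e by simp
      then show False using ind nz \<open>a = 0\<close> unfolding indep2_def by blast
    qed
    have e': "Const b * u1 + Const c * u2 + Const a * l = 0" using e by (simp add: ac_simps)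
    have ldef: "l = Const (- b / a) * u1 + Const (- c / a) * u2" by (rule solve3[OF e' \<open>a \<noteq> 0\<close>])
    show ?thesis
    proof (cases "- b / a = 0")
      case False
      from lemQ[OF l u1 u2 ind ldef False h' ND] show ?thesis using V by simp
    next
      case True
      have ldef': "l = Const (- c / a) * u2 + Const (- b / a) * u1" using ldef by (simp add: add.commute)
      have c0: "- c / a \<noteq> 0" using True ldef lnz by auto
      have ND': "\<forall>u \<in> kspan {u2, u1}. u \<noteq> 0 \<longrightarrow> \<not> u dvd h'" using ND by (simp add: insert_commute)
      from lemQ[OF l u2 u1 indep2_swap[OF ind] ldef' c0 h' ND'] show ?thesis
        using V by (simp add: insert_commute)
    qed
  qed
qed

lemma lemML:
  fixes f g h r1 r2 :: "'a::field mpoly4"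
  assumes f: "f \<in> Rdeg 2" and g: "g \<in> Rdeg 2" and h: "h \<in> Rdeg 2" and ind: "indep3 f g h"
    and r1: "r1 \<in> Rdeg 1" and r2: "r2 \<in> Rdeg 1" and rnz: "\<not> (r1 = 0 \<and> r2 = 0)"
    and rel: "r1 * f + r2 * g + (Const c1 * r1 + Const c2 * r2) * h = 0"
    and OD: "\<And>x y z. x \<in> Rdeg 1 \<Longrightarrow> y \<in> Rdeg 1 \<Longrightarrow> z \<in> Rdeg 1 \<Longrightarrow> x * f + y * g + z * h = 0 \<Longrightarrow>
              \<exists>k. x = Const k * r1 \<and> y = Const k * r2 \<and> z = Const k * (Const c1 * r1 + Const c2 * r2)"
  shows "(\<exists>l u1 u2 h'. PART1 (kspan {f, g, h}) l u1 u2 h') \<and> PART2 (kspan {f, g, h})"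
proof -
  define f' where "f' = f + Const c1 * h"
  define g' where "g' = g + Const c2 * h"
  have rel': "r1 * f' + r2 * g' = 0" using rel unfolding f'_def g'_def by (simp add: algebra_simps)
  have Z: "C = 0" if A: "A \<in> Rdeg 1" and B: "B \<in> Rdeg 1" and C: "C \<in> Rdeg 1"
    and e: "A * f' + B * g' + C * h = 0" for A B C
  proof -
    have "A * f + B * g + (C + Const c1 * A + Const c2 * B) * h = 0"
      using e unfolding f'_def g'_def by (simp add: algebra_simps)
    moreover have "C + Const c1 * A + Const c2 * B \<in> Rdeg 1"
      by (intro Rdeg_add Rdeg_Const_mult A B C)
    ultimately obtain k where k: "A = Const k * r1" "B = Const k * r2"
      "C + Const c1 * A + Const c2 * B = Const k * (Const c1 * r1 + Const c2 * r2)"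
      using OD A B by blast
    have "C + Const c1 * A + Const c2 * B = C + Const k * (Const c1 * r1 + Const c2 * r2)"
      unfolding k(1,2) by (simp add: algebra_simps Const_mult mult.commute)
    then show "C = 0" using k(3) by simp
  qed
  have f'2: "f' \<in> Rdeg 2" unfolding f'_def by (intro Rdeg_add Rdeg_Const_mult f h)
  have g'2: "g' \<in> Rdeg 2" unfolding g'_def by (intro Rdeg_add Rdeg_Const_mult g h)
  have f'nz: "f' \<noteq> 0" unfolding f'_def by (rule indep3_f_nz[OF ind])
  have g'nz: "g' \<noteq> 0" unfolding g'_def by (rule indep3_g_nz[OF ind])
  show ?thesis
  proof (cases "indep2 r1 r2")
    case True
    have r2nz: "r2 \<noteq> 0" using indep2_nz[OF True] by simp
    have "r2 dvd f'" by (rule lemP[OF r1 r2 True rel'])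
    then obtain q0 where "f' = r2 * q0" by (elim dvdE)
    from lin_quotient[OF r2 f'2 this]
    obtain l where fl: "f' = r2 * l" and l: "l \<in> Rdeg 1" by blast
    have "r2 * (r1 * l + g') = 0" using rel' fl by (simp add: algebra_simps)
    then have "r1 * l + g' = 0" using r2nz by simp
    then have gl: "g' = - (r1 * l)" by (simp add: eq_neg_iff_add_eq_0 add.commute)
    have lnz: "l \<noteq> 0" using fl f'nz by auto
    have P1: "PART1 (kspan {f, g, h}) l r2 (- r1) h"
      unfolding PART1_def
    proof (intro conjI)
      show "l \<in> Rdeg 1" "r2 \<in> Rdeg 1" "- r1 \<in> Rdeg 1" "h \<in> Rdeg 2"
        using l r2 r1 h by (auto intro: Rdeg_uminus)
      show "kindep [r2, - r1]" unfolding kindep2_iff indep2_def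
      proof (intro allI impI)
        fix x y assume "Const x * r2 + Const y * (- r1) = 0"
        then have "Const (- y) * r1 + Const x * r2 = 0" by (simp add: Const_uminus algebra_simps)
        then show "x = 0 \<and> y = 0" using True unfolding indep2_def by fastforce
      qed
      have lr2: "l * r2 = f'" and lr1: "l * - r1 = g'" using fl gl by (simp_all add: mult.commute)
      show "kspan {f, g, h} = kspan {l * r2, l * - r1, h}"
        unfolding lr2 lr1
      proof (rule kspan_eqI)
        have "f \<in> vs.span {f', g', h}" 
        proof -
          have "f = f' - Const c1 * h" unfolding f'_def by simp
          also have "\<dots> \<in> vs.span {f', g', h}" by (intro vs.span_diff vs.span_scale vs.span_base) auto
          finally show ?thesis .
        qed
        moreover have "g \<in> vs.span {f', g', h}" 
        proof -
          have "g = g' - Const c2 * h" unfolding g'_def by simp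
          also have "\<dots> \<in> vs.span {f', g', h}" by (intro vs.span_diff vs.span_scale vs.span_base) auto
          finally show ?thesis .
        qed
        moreover have "h \<in> vs.span {f', g', h}" by (auto intro: vs.span_base)
        ultimately show "{f, g, h} \<subseteq> vs.span {f', g', h}" by auto
        have "f' \<in> vs.span {f, g, h}" unfolding f'_def by (intro vs.span_add vs.span_scale vs.span_base) auto
        moreover have "g' \<in> vs.span {f, g, h}" unfolding g'_def by (intro vs.span_add vs.span_scale vs.span_base) auto
        moreover have "h \<in> vs.span {f, g, h}" by (auto intro: vs.span_base)
        ultimately show "{f', g', h} \<subseteq> vs.span {f, g, h}" by auto
      qed
      show "\<not> l dvd h"
      proof
        assume "l dvd h"
        then obtain q where "h = l * q" by (elim dvdE)
        from lin_quotient[OF l h this] obtain m where hm: "h = l * m" and m: "m \<in> Rdeg 1" by blast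
        have eq: "m * f' + 0 * g' + (- r2) * h = 0" unfolding fl hm by (simp add: algebra_simps)
        have "- r2 = 0" by (rule Z[OF m Rdeg_zero Rdeg_uminus[OF r2] eq])
        then show False using r2nz by simp
      qed
      show "\<forall>u \<in> kspan {r2, - r1}. u \<noteq> 0 \<longrightarrow> \<not> u dvd h"
      proof (intro ballI impI notI)
        fix u assume "u \<in> kspan {r2, - r1}" "u \<noteq> 0" "u dvd h"
        then obtain s t where u: "u = Const s * r2 + Const t * (- r1)"
          using span2_obtain unfolding kspan_eq by blast
        have u1: "u \<in> Rdeg 1" unfolding u by (intro Rdeg_add Rdeg_Const_mult r2 Rdeg_uminus r1)
        obtain q where "h = u * q" using \<open>u dvd h\<close> by (elim dvdE)
        from lin_quotient[OF u1 h this] obtain m where hm: "h = u * m" and m: "m \<in> Rdeg 1" by blast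
        have eq: "(- (Const s * m)) * f' + (- (Const t * m)) * g' + l * h = 0"
          unfolding fl gl hm u by (simp add: algebra_simps)
        have "l = 0" by (rule Z[OF Rdeg_uminus[OF Rdeg_Const_mult[OF m]] Rdeg_uminus[OF Rdeg_Const_mult[OF m]] l eq])
        then show False using lnz by simp
      qed
    qed
    then show ?thesis using part2_of_part1[OF P1 lnz] by blast
  next
    case False
    then obtain a b where e: "Const a * r1 + Const b * r2 = 0" and nz: "\<not> (a = 0 \<and> b = 0)"
      unfolding indep2_def by blast
    show ?thesis
    proof (cases "b = 0")
      case False
      define k where "k = - a / b"
      have r2d: "r2 = Const k * r1" unfolding k_def by (rule solve2[OF e False])
      have r1nz: "r1 \<noteq> 0" using rnz r2d by auto
      have "r1 * (f' + Const k * g') = 0" using rel' r2d by (simp add: algebra_simps)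
      then have "f' + Const k * g' = 0" using r1nz by simp
      moreover have "Const 1 * f + Const k * g + Const (c1 + k * c2) * h = f' + Const k * g'"
        unfolding f'_def g'_def Const_add Const_mult[symmetric] by (simp add: algebra_simps)
      ultimately have "Const 1 * f + Const k * g + Const (c1 + k * c2) * h = 0" by simp
      then show ?thesis using ind unfolding indep3_def by fastforce
    next
      case True
      then have "a \<noteq> 0" using nz by simp
      then have "r1 = 0" using e True by simp
      then have "r2 \<noteq> 0" using rnz by simp
      moreover have "r2 * g' = 0" using rel' \<open>r1 = 0\<close> by simp
      ultimately show ?thesis using g'nz by simp
    qed
  qed
qed

theorem lemma3p2:
  fixes f g h :: "'a::alg_closed_field mpoly4"
  assumes "f \<in> Rdeg 2" "g \<in> Rdeg 2" "h \<in> Rdeg 2"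
    and "kindep [f, g, h]"
    and "one_dim_triples (linrels f g h)"
  shows "(\<exists>l u1 u2 h'. l \<in> Rdeg 1 \<and> u1 \<in> Rdeg 1 \<and> u2 \<in> Rdeg 1 \<and> kindep [u1, u2] \<and>
            h' \<in> Rdeg 2 \<and> kspan {f, g, h} = kspan {l * u1, l * u2, h'} \<and>
            \<not> l dvd h' \<and> (\<forall>u \<in> kspan {u1, u2}. u \<noteq> 0 \<longrightarrow> \<not> u dvd h'))
       \<and> (\<exists>w x y z h'. w \<in> Rdeg 1 \<and> x \<in> Rdeg 1 \<and> y \<in> Rdeg 1 \<and> z \<in> Rdeg 1 \<and>
            kindep [w, x, y, z] \<and> h' \<in> Rdeg 2 \<and>
            ((kspan {f, g, h} = kspan {x * w, y * w, h'} \<and> \<not> w dvd h' \<and>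
                (\<forall>u \<in> kspan {x, y}. u \<noteq> 0 \<longrightarrow> \<not> u dvd h')) \<or>
             (kspan {f, g, h} = kspan {w * w, w * x, h'} \<and>
                (\<forall>u \<in> kspan {w, x}. u \<noteq> 0 \<longrightarrow> \<not> u dvd h'))))"
proof -
  note f = assms(1) and g = assms(2) and h = assms(3)
  have ind: "indep3 f g h" using assms(4) kindep3_iff by blast
  obtain r1 r2 r3 where rnz: "(r1, r2, r3) \<noteq> (0, 0, 0)"
    and S: "linrels f g h = {(Const c * r1, Const c * r2, Const c * r3) | c. True}"
    using assms(5) unfolding one_dim_triples_def by blast
  have "(r1, r2, r3) \<in> linrels f g h" unfolding S by (rule CollectI, rule exI[of _ 1]) simp
  then have r1: "r1 \<in> Rdeg 1" and r2: "r2 \<in> Rdeg 1" and r3: "r3 \<in> Rdeg 1"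
    and rel: "r1 * f + r2 * g + r3 * h = 0" unfolding linrels_def by auto
  have OD: "\<exists>k. x = Const k * r1 \<and> y = Const k * r2 \<and> z = Const k * r3"
    if "x \<in> Rdeg 1" "y \<in> Rdeg 1" "z \<in> Rdeg 1" "x * f + y * g + z * h = 0" for x y z
  proof -
    have "(x, y, z) \<in> linrels f g h" using that unfolding linrels_def by auto
    then show ?thesis unfolding S by auto
  qed
  have main: "(\<exists>l u1 u2 h'. PART1 (kspan {f, g, h}) l u1 u2 h') \<and> PART2 (kspan {f, g, h})"
  proof (cases "indep3 r1 r2 r3")
    case True
    from lemK[OF r1 r2 r3 True f g h rel] obtain m s t where
      mst: "m \<in> Rdeg 1" "s \<in> Rdeg 1" "t \<in> Rdeg 1"
      and F: "f = r2 * m + r3 * s" and G: "g = r3 * t - r1 * m" and H: "h = - (r1 * s) - r2 * t"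
      by blast
    have "t * f + (- s) * g + m * h = 0" unfolding F G H by (simp add: algebra_simps)
    then obtain k where k: "t = Const k * r1" "- s = Const k * r2" "m = Const k * r3"
      using OD[OF mst(3) Rdeg_uminus[OF mst(2)] mst(1)] by blast
    have "s = - (Const k * r2)" using k(2) by (metis minus_minus)
    then have "f = 0" unfolding F using k(3) by (simp add: algebra_simps)
    moreover have "f \<noteq> 0" using indep3_f_nz[OF ind, of 0] by simp
    ultimately show ?thesis by simp
  next
    case False
    then obtain x y z where e: "Const x * r1 + Const y * r2 + Const z * r3 = 0" and nz: "\<not> (x = 0 \<and> y = 0 \<and> z = 0)"
      unfolding indep3_def by blast
    consider "z \<noteq> 0" | "z = 0" "y \<noteq> 0" | "z = 0" "y = 0" "x \<noteq> 0" using nz by blast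
    then show ?thesis
    proof cases
      case 1
      have r3d: "r3 = Const (- x / z) * r1 + Const (- y / z) * r2" by (rule solve3[OF e 1])
      have rnz': "\<not> (r1 = 0 \<and> r2 = 0)" using rnz r3d by auto
      show ?thesis
        by (rule lemML[OF f g h ind r1 r2 rnz', of "- x / z" "- y / z"])
           (use rel OD r3d in auto)
    next
      case 2
      have e': "Const x * r1 + Const z * r3 + Const y * r2 = 0" using e by (simp add: ac_simps)
      have r2d: "r2 = Const (- x / y) * r1 + Const (- z / y) * r3" by (rule solve3[OF e' 2(2)])
      have rnz': "\<not> (r1 = 0 \<and> r3 = 0)" using rnz r2d by auto
      have rel': "r1 * f + r3 * h + r2 * g = 0" using rel by (simp add: ac_simps)
      have OD': "\<exists>k. a = Const k * r1 \<and> b = Const k * r3 \<and> c = Const k * r2"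
        if "a \<in> Rdeg 1" "b \<in> Rdeg 1" "c \<in> Rdeg 1" "a * f + b * h + c * g = 0" for a b c
      proof -
        have "a * f + c * g + b * h = 0" using that(4) by (simp add: ac_simps)
        then show ?thesis using OD[OF that(1) that(3) that(2)] by blast
      qed
      have "(\<exists>l u1 u2 h'. PART1 (kspan {f, h, g}) l u1 u2 h') \<and> PART2 (kspan {f, h, g})"
        by (rule lemML[OF f h g indep3_perm1[OF ind] r1 r3 rnz', of "- x / y" "- z / y"])
           (use rel' OD' r2d in auto)
      then show ?thesis by (simp add: insert_commute)
    next
      case 3
      have e': "Const y * r2 + Const z * r3 + Const x * r1 = 0" using e by (simp add: ac_simps)
      have r1d: "r1 = Const (- y / x) * r2 + Const (- z / x) * r3" by (rule solve3[OF e' 3(3)])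
      have rnz': "\<not> (r2 = 0 \<and> r3 = 0)" using rnz r1d by auto
      have rel': "r2 * g + r3 * h + r1 * f = 0" using rel by (simp add: ac_simps)
      have OD': "\<exists>k. a = Const k * r2 \<and> b = Const k * r3 \<and> c = Const k * r1"
        if "a \<in> Rdeg 1" "b \<in> Rdeg 1" "c \<in> Rdeg 1" "a * g + b * h + c * f = 0" for a b c
      proof -
        have "c * f + a * g + b * h = 0" using that(4) by (simp add: ac_simps)
        then show ?thesis using OD[OF that(3) that(1) that(2)] by blast
      qed
      have "(\<exists>l u1 u2 h'. PART1 (kspan {g, h, f}) l u1 u2 h') \<and> PART2 (kspan {g, h, f})"
        by (rule lemML[OF g h f indep3_perm2[OF ind] r2 r3 rnz', of "- y / x" "- z / x"])
           (use rel' OD' r1d in auto)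
      then show ?thesis by (simp add: insert_commute)
    qed
  qed
  then show ?thesis unfolding PART1_def PART2_def by blast
qed

end
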